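(* Let $X=\{x_0,x_1,\ldots,x_m\}$ and let $\mathbb{R}^m_{pi}\langle\langle X\rangle\rangle$ be the set of purely improper series in $\mathbb{R}^m\langle\langle X\rangle\rangle$. Then the set $\delta\sqcup\!\sqcup\,\mathbb{R}^m_{pi}\langle\langle X\rangle\rangle=\{\delta_d : d\in \mathbb{R}^m_{pi}\langle\langle X\rangle\rangle\}$ forms a group under the multiplicative composition product $\delta_c\circ\delta_d:=\delta_{d\,\sqcup\!\sqcup\,(c\,\tilde\circ\,\delta_d)}$, with identity element $\delta_{\mathbb{1}}$, where $\mathbb{1}=[1\,1\cdots 1]^t\in\mathbb{R}^m$.
   Context: $X$ is a finite alphabet of noncommuting letters, $X^\ast$ the free monoid of words (with empty word $\emptyset$), and $\mathbb{R}^\ell\langle\langle X\rangle\rangle$ the set of formal power series $c=\sum_{\eta\in X^\ast}(c,\eta)\eta$ with coefficients $(c,\eta)\in\mathbb{R}^\ell$; $c_i$ denotes the $i$-th component series. A series is proper if $(c,\emptyset)=0$; $c\in\mathbb{R}^\ell\langle\langle X\rangle\rangle$ is purely improper if $(c_i,\emptyset)\neq 0$ for every $i=1,\ldots,\ell$. All products of vector-valued series are taken componentwise. The shuffle product is the bilinear product on words defined by $(x_i\eta)\sqcup\!\sqcup(x_j\xi)=x_i(\eta\sqcup\!\sqcup x_j\xi)+x_j(x_i\eta\sqcup\!\sqcup\xi)$, $\eta\sqcup\!\sqcup\emptyset=\emptyset\sqcup\!\sqcup\eta=\eta$, extended to series. The multiplicative mixed composition product of $c\in\mathbb{R}^p\langle\langle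 X\rangle\rangle$ and $d\in\mathbb{R}^m\langle\langle X\rangle\rangle$ is $c\,\tilde\circ\,\delta_d=\sum_{\eta\in X^\ast}(c,\eta)\,\bar\phi_d(\eta)(\mathbf{1})$, where $\mathbf{1}=1\emptyset$ and $\bar\phi_d$ is the algebra homomorphism from words (under concatenation) to linear endomorphisms of $\mathbb{R}\langle\langle X\rangle\rangle$ (under composition) determined by $\bar\phi_d(x_0)(e)=x_0e$ and $\bar\phi_d(x_i)(e)=x_i(d_i\sqcup\!\sqcup e)$ for $i=1,\ldots,m$, with $\bar\phi_d(\emptyset)$ the identity. For $d\in\mathbb{R}^m\langle\langle X\rangle\rangle$, $\delta_d$ is a formal symbol (standing for $\delta\sqcup\!\sqcup d$, the generating series of the operator $u\mapsto u\cdot F_d[u]$, $F_d$ the Chen-Fliess series of $d$); $\delta_c=\delta_d$ iff $c=d$. *)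

theory Defs
  imports Complex_Main "HOL-Algebra.Group"
begin

text \<open>Letters x_0,...,x_m are encoded by the natural numbers 0..m; words are lists.
  A scalar series is a coefficient function on words; an R^m-valued series is a
  family of component series indexed by i (only i in {1..m} are meaningful).\<close>

type_synonym series = "nat list \<Rightarrow> real"
type_synonym vseries = "nat \<Rightarrow> series"

definition shuffle_prod :: "series \<Rightarrow> series \<Rightarrow> series" where
  "shuffle_prod c d = (\<lambda>w. \<Sum>S\<in>Pow {..<length w}.
      c (nths w S) * d (nths w ({..<length w} - S)))"

definition one_series :: series where
  "one_series = (\<lambda>w. if w = [] then 1 else 0)"

definition prepend :: "nat \<Rightarrow> series \<Rightarrow> series" where
  "prepend a e = (\<lambda>w. case w of [] \<Rightarrow> 0 | b # w' \<Rightarrow> (if b = a then e w' else 0))"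

fun phi :: "vseries \<Rightarrow> nat list \<Rightarrow> series \<Rightarrow> series" where
  "phi d [] e = e"
| "phi d (a # \<eta>) e =
     (if a = 0 then prepend 0 (phi d \<eta> e) else prepend a (shuffle_prod (d a) (phi d \<eta> e)))"

text \<open>Since phi_d(eta)(1) is
  supported on words of length at least length eta, the coefficient of w only
  involves the finitely many eta with length eta <= length w.\<close>
definition mixed_comp :: "nat \<Rightarrow> vseries \<Rightarrow> vseries \<Rightarrow> vseries" where
  "mixed_comp m c d = (\<lambda>j w. \<Sum>\<eta>\<in>{\<eta>. set \<eta> \<subseteq> {0..m} \<and> length \<eta> \<le> length w}.
      c j \<eta> * phi d \<eta> one_series w)"

definition wf_vseries :: "nat \<Rightarrow> vseries \<Rightarrow> bool" where
  "wf_vseries m c \<longleftrightarrow> (\<forall>i w. (i \<notin> {1..m} \<or> \<not> set w \<subseteq> {0..m}) \<longrightarrow> c i w = 0)"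

definition purely_improper :: "nat \<Rightarrow> vseries \<Rightarrow> bool" where
  "purely_improper m c \<longleftrightarrow> (\<forall>i\<in>{1..m}. c i [] \<noteq> 0)"

definition pi_series :: "nat \<Rightarrow> vseries set" where
  "pi_series m = {c. wf_vseries m c \<and> purely_improper m c}"

text \<open>delta_c o delta_d = delta_(d shuffle (c ~o delta_d)), identifying delta_d with d.\<close>
definition mult_comp :: "nat \<Rightarrow> vseries \<Rightarrow> vseries \<Rightarrow> vseries" where
  "mult_comp m c d = (\<lambda>i. shuffle_prod (d i) (mixed_comp m c d i))"

definition one_vseries :: "nat \<Rightarrow> vseries" where
  "one_vseries m = (\<lambda>i. if i \<in> {1..m} then one_series else (\<lambda>_. 0))"

definition delta_group :: "nat \<Rightarrow> vseries monoid" where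
  "delta_group m = \<lparr>carrier = pi_series m, mult = mult_comp m, one = one_vseries m\<rparr>"

end

theory Submission
  imports Defs
begin

abbreviation sh where "sh \<equiv> shuffle_prod"
definition dv :: "nat \<Rightarrow> series \<Rightarrow> series" where "dv b f = (\<lambda>v. f (b # v))"

lemma sh_Nil[simp]: "sh c d [] = c [] * d []"
  by (simp add: shuffle_prod_def)

lemma Pow_lessThan_Suc:
  "Pow {..<Suc n} = (\<lambda>T. Suc ` T) ` Pow {..<n} \<union> (\<lambda>T. insert 0 (Suc ` T)) ` Pow {..<n}"
proof (rule equalityI[OF subsetI])
  fix S assume S: "S \<in> Pow {..<Suc n}"
  define T where "T = {j. Suc j \<in> S}"
  have T: "T \<in> Pow {..<n}" using S by (auto simp: T_def)
  show "S \<in> (\<lambda>T. Suc ` T) ` Pow {..<n} \<union> (\<lambda>T. insert 0 (Suc ` T)) ` Pow {..<n}"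
  proof (cases "0 \<in> S")
    case True
    have "S = insert 0 (Suc ` T)" using True by (auto simp: T_def image_iff) (metis not0_implies_Suc)
    then show ?thesis using T by blast
  next
    case False
    have "S = Suc ` T" using False by (auto simp: T_def image_iff) (metis not0_implies_Suc)
    then show ?thesis using T by blast
  qed
qed auto

lemma sh_Cons: "sh c d (b # w) = sh (dv b c) d w + sh c (dv b d) w"
proof -
  let ?n = "length w"
  let ?f = "\<lambda>S. c (nths (b # w) S) * d (nths (b # w) ({..<Suc ?n} - S))"
  have A: "?f (Suc ` T) = c (nths w T) * dv b d (nths w ({..<?n} - T))" if "T \<subseteq> {..<?n}" for T
  proof -
    have 1: "{j. Suc j \<in> Suc ` T} = T" by auto
    have 2: "{j. Suc j \<in> {..<Suc ?n} - Suc ` T} = {..<?n} - T" by auto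
    have 3: "0 \<in> {..<Suc ?n} - Suc ` T" by auto
    have "nths (b # w) (Suc ` T) = nths w T" unfolding nths_Cons 1 by simp
    moreover have "nths (b # w) ({..<Suc ?n} - Suc ` T) = b # nths w ({..<?n} - T)"
      unfolding nths_Cons 2 using 3 by simp
    ultimately show ?thesis by (simp add: dv_def)
  qed
  have B: "?f (insert 0 (Suc ` T)) = dv b c (nths w T) * d (nths w ({..<?n} - T))" if "T \<subseteq> {..<?n}" for T
  proof -
    have 1: "{j. Suc j \<in> insert 0 (Suc ` T)} = T" by auto
    have 2: "{j. Suc j \<in> {..<Suc ?n} - insert 0 (Suc ` T)} = {..<?n} - T" by auto
    have 3: "0 \<notin> {..<Suc ?n} - insert 0 (Suc ` T)" by auto
    have "nths (b # w) (insert 0 (Suc ` T)) = b # nths w T" unfolding nths_Cons 1 by simp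
    moreover have "nths (b # w) ({..<Suc ?n} - insert 0 (Suc ` T)) = nths w ({..<?n} - T)"
      unfolding nths_Cons 2 using 3 by simp
    ultimately show ?thesis by (simp add: dv_def)
  qed
  have inj1: "inj_on (\<lambda>T. Suc ` T) (Pow {..<?n})" by (simp add: inj_on_def inj_image_eq_iff)
  have inj2: "inj_on (\<lambda>T. insert 0 (Suc ` T)) (Pow {..<?n})"
  proof (rule inj_onI)
    fix x y assume "insert 0 (Suc ` x) = insert 0 (Suc ` y)"
    then have "Suc ` x = Suc ` y" by (metis Diff_insert_absorb image_iff nat.distinct(1))
    then show "x = y" by (simp add: inj_image_eq_iff)
  qed
  have disj: "(\<lambda>T. Suc ` T) ` Pow {..<?n} \<inter> (\<lambda>T. insert 0 (Suc ` T)) ` Pow {..<?n} = {}" by auto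
  have "sh c d (b # w) = sum ?f (Pow {..<Suc ?n})" by (simp add: shuffle_prod_def)
  also have "\<dots> = sum ?f ((\<lambda>T. Suc ` T) ` Pow {..<?n}) + sum ?f ((\<lambda>T. insert 0 (Suc ` T)) ` Pow {..<?n})"
    by (simp only: Pow_lessThan_Suc) (rule sum.union_disjoint, auto)
  also have "sum ?f ((\<lambda>T. Suc ` T) ` Pow {..<?n}) = sh c (dv b d) w"
    unfolding sum.reindex[OF inj1] shuffle_prod_def o_def by (rule sum.cong) (auto simp: A)
  also have "sum ?f ((\<lambda>T. insert 0 (Suc ` T)) ` Pow {..<?n}) = sh (dv b c) d w"
    unfolding sum.reindex[OF inj2] shuffle_prod_def o_def by (rule sum.cong) (auto simp: B)
  finally show ?thesis by simp
qed

lemma dv_add[simp]: "dv b (\<lambda>v. f v + g v) = (\<lambda>v. dv b f v + dv b g v)" by (simp add: dv_def)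
lemma dv_zero[simp]: "dv b (\<lambda>v. 0) = (\<lambda>v. 0)" by (simp add: dv_def)
lemma dv_one[simp]: "dv b one_series = (\<lambda>v. 0)" by (simp add: dv_def one_series_def)

lemma sh_zero_left[simp]: "sh (\<lambda>v. 0) d = (\<lambda>v. 0)"
proof (rule ext)
  fix w show "sh (\<lambda>v. 0) d w = 0" by (simp add: shuffle_prod_def)
qed

lemma sh_zero_right[simp]: "sh c (\<lambda>v. 0) = (\<lambda>v. 0)"
proof (rule ext)
  fix w show "sh c (\<lambda>v. 0) w = 0" by (simp add: shuffle_prod_def)
qed

lemma sh_add_left: "sh (\<lambda>v. f v + g v) e w = sh f e w + sh g e w"
  by (simp add: shuffle_prod_def distrib_right sum.distrib)

lemma sh_add_right: "sh e (\<lambda>v. f v + g v) w = sh e f w + sh e g w"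
  by (simp add: shuffle_prod_def distrib_left sum.distrib)

lemma sh_comm_pt: "sh c d w = sh d c w"
  by (induction w arbitrary: c d) (simp_all add: sh_Cons)

lemma sh_comm: "sh c d = sh d c"
  using sh_comm_pt by blast

lemma dv_sh: "dv b (sh c d) = (\<lambda>v. sh (dv b c) d v + sh c (dv b d) v)"
  by (rule ext) (simp add: dv_def sh_Cons)

lemma sh_assoc_pt: "sh (sh c d) e w = sh c (sh d e) w"
proof (induction w arbitrary: c d e)
  case Nil then show ?case by simp
next
  case (Cons b w)
  show ?case
    by (simp add: sh_Cons dv_sh sh_add_left sh_add_right Cons.IH)
qed

lemma sh_assoc: "sh (sh c d) e = sh c (sh d e)"
  using sh_assoc_pt by blast

lemma sh_one_left[simp]: "sh one_series c = c"
proof (rule ext)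
  fix w show "sh one_series c w = c w"
    by (induction w arbitrary: c) (simp_all add: sh_Cons one_series_def dv_def)
qed

lemma sh_one_right[simp]: "sh c one_series = c"
  by (subst sh_comm) simp

lemma length_nths_le: "length (nths xs I) \<le> length xs"
  by (induction xs arbitrary: I) (simp_all add: nths_Cons le_SucI)

lemma sh_local: "(\<And>u. length u \<le> length w \<Longrightarrow> g u = g' u) \<Longrightarrow> sh f g w = sh f g' w"
  unfolding shuffle_prod_def by (rule sum.cong) (auto intro: length_nths_le)

lemma sh_sum_right: "sh f (\<lambda>u. \<Sum>\<eta>\<in>A. a \<eta> * g \<eta> u) w = (\<Sum>\<eta>\<in>A. a \<eta> * sh f (g \<eta>) w)"
  unfolding shuffle_prod_def by (simp add: sum_distrib_left sum_distrib_right mult_ac sum.swap[of _ A])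

lemma sh_vanish_short: "(\<And>u. length u \<le> length w \<Longrightarrow> g u = 0) \<Longrightarrow> sh f g w = 0"
  using sh_local[of w g "\<lambda>_. 0" f] by simp

lemma sh_lowest: "(\<And>u. length u < length w \<Longrightarrow> g u = 0) \<Longrightarrow> sh f g w = f [] * g w"
proof (induction w arbitrary: f g)
  case Nil then show ?case by simp
next
  case (Cons b w)
  have 1: "sh (dv b f) g w = 0" by (rule sh_vanish_short) (use Cons.prems in auto)
  have 2: "sh f (dv b g) w = f [] * dv b g w"
    by (rule Cons.IH) (use Cons.prems in \<open>auto simp: dv_def\<close>)
  show ?case using 1 2 by (simp add: sh_Cons dv_def)
qed

definition Aw :: "nat \<Rightarrow> nat \<Rightarrow> nat list set" where
  "Aw m n = {\<eta>. set \<eta> \<subseteq> {0..m} \<and> length \<eta> \<le> n}"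

definition Phi :: "nat \<Rightarrow> vseries \<Rightarrow> series \<Rightarrow> series" where
  "Phi m d s = (\<lambda>w. \<Sum>\<eta>\<in>Aw m (length w). s \<eta> * phi d \<eta> one_series w)"

definition D :: "vseries \<Rightarrow> nat \<Rightarrow> series" where
  "D d a = (if a = 0 then one_series else d a)"

lemma finite_Aw[simp]: "finite (Aw m n)"
  unfolding Aw_def by (rule finite_lists_length_le) simp

lemma mixed_comp_Phi: "mixed_comp m c d j = Phi m d (c j)"
  by (simp add: mixed_comp_def Phi_def Aw_def)

lemma mult_comp_Phi: "mult_comp m c d i = sh (d i) (Phi m d (c i))"
  by (simp add: mult_comp_def mixed_comp_Phi)

lemma phi_Cons_Cons: "phi d (a # \<eta>) e (b # w) = (if a = b then sh (D d a) (phi d \<eta> e) w else 0)"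
  by (simp add: prepend_def D_def)

lemma phi_Cons_Nil: "phi d (a # \<eta>) e [] = 0"
  by (simp add: prepend_def)

lemma phi_short: "length w < length \<eta> \<Longrightarrow> phi d \<eta> e w = 0"
proof (induction \<eta> arbitrary: w)
  case Nil then show ?case by simp
next
  case (Cons a \<eta>)
  show ?case
  proof (cases w)
    case Nil then show ?thesis by (simp add: phi_Cons_Nil del: phi.simps)
  next
    case (Cons b w')
    have "sh (D d a) (phi d \<eta> e) w' = 0"
      by (rule sh_vanish_short) (use Cons Cons.prems in \<open>auto intro: Cons.IH\<close>)
    then show ?thesis using Cons by (auto simp add: phi_Cons_Cons simp del: phi.simps)
  qed
qed

lemma Phi_ext: "length u \<le> N \<Longrightarrow> Phi m d s u = (\<Sum>\<eta>\<in>Aw m N. s \<eta> * phi d \<eta> one_series u)"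
  unfolding Phi_def
proof (rule sum.mono_neutral_left)
  assume u: "length u \<le> N"
  show "Aw m (length u) \<subseteq> Aw m N" using u by (auto simp: Aw_def)
  show "\<forall>i\<in>Aw m N - Aw m (length u). s i * phi d i one_series u = 0"
    by (auto simp: Aw_def) (metis not_le phi_short)
qed simp

lemma Phi_Nil[simp]: "Phi m d s [] = s []"
proof -
  have "Aw m 0 = {[]}" by (auto simp: Aw_def)
  then show ?thesis by (simp add: Phi_def one_series_def)
qed

lemma Phi_Cons: "Phi m d s (b # w) = (if b \<le> m then sh (D d b) (Phi m d (dv b s)) w else 0)"
proof (cases "b \<le> m")
  case True
  let ?n = "length w"
  let ?g = "\<lambda>\<eta>. s \<eta> * phi d \<eta> one_series (b # w)"
  have "Phi m d s (b # w) = sum ?g (Aw m (Suc ?n))" by (simp add: Phi_def)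
  also have "\<dots> = sum ?g ((Cons b) ` Aw m ?n)"
  proof (rule sum.mono_neutral_right)
    show "(#) b ` Aw m ?n \<subseteq> Aw m (Suc ?n)" using True by (auto simp: Aw_def)
    show "\<forall>i\<in>Aw m (Suc ?n) - (#) b ` Aw m ?n. ?g i = 0"
    proof
      fix i assume i: "i \<in> Aw m (Suc ?n) - (#) b ` Aw m ?n"
      show "?g i = 0"
      proof (cases i)
        case Nil then show ?thesis by (simp add: one_series_def)
      next
        case (Cons a \<eta>)
        have "a \<noteq> b" using i Cons by (auto simp: Aw_def)
        then show ?thesis using Cons by (simp add: phi_Cons_Cons del: phi.simps)
      qed
    qed
  qed simp
  also have "\<dots> = (\<Sum>\<eta>\<in>Aw m ?n. s (b # \<eta>) * sh (D d b) (phi d \<eta> one_series) w)"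
    by (simp add: sum.reindex phi_Cons_Cons del: phi.simps)
  also have "\<dots> = sh (D d b) (\<lambda>u. \<Sum>\<eta>\<in>Aw m ?n. dv b s \<eta> * phi d \<eta> one_series u) w"
    by (simp add: sh_sum_right dv_def)
  also have "\<dots> = sh (D d b) (Phi m d (dv b s)) w"
    by (rule sh_local) (simp add: Phi_ext)
  finally show ?thesis using True by simp
next
  case False
  have "Phi m d s (b # w) = 0"
    unfolding Phi_def
  proof (rule sum.neutral, rule ballI)
    fix i assume i: "i \<in> Aw m (length (b # w))"
    show "s i * phi d i one_series (b # w) = 0"
    proof (cases i)
      case Nil then show ?thesis by (simp add: one_series_def)
    next
      case (Cons a \<eta>)
      have "a \<noteq> b" using i Cons False by (auto simp: Aw_def)
      then show ?thesis using Cons by (simp add: phi_Cons_Cons del: phi.simps)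
    qed
  qed
  then show ?thesis using False by simp
qed

lemma dv_Phi: "dv b (Phi m d s) = (if b \<le> m then sh (D d b) (Phi m d (dv b s)) else (\<lambda>_. 0))"
  by (rule ext) (simp add: dv_def Phi_Cons)

lemma Phi_add: "Phi m d (\<lambda>v. s v + t v) = (\<lambda>w. Phi m d s w + Phi m d t w)"
  by (rule ext) (simp add: Phi_def distrib_right sum.distrib)

lemma Phi_zero[simp]: "Phi m d (\<lambda>v. 0) = (\<lambda>v. 0)"
  by (rule ext) (simp add: Phi_def)

lemma Phi_one[simp]: "Phi m d one_series = one_series"
proof (rule ext)
  fix w show "Phi m d one_series w = one_series w"
    by (cases w) (simp_all add: Phi_Cons one_series_def[symmetric], simp add: one_series_def)
qed

lemma Phi_sh_pt: "Phi m d (sh s t) w = sh (Phi m d s) (Phi m d t) w"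
proof (induction "length w" arbitrary: w s t rule: less_induct)
  case less
  show ?case
  proof (cases w)
    case Nil then show ?thesis by simp
  next
    case (Cons b w')
    show ?thesis
    proof (cases "b \<le> m")
      case True
      let ?D = "D d b"
      have IH: "\<And>u s t. length u \<le> length w' \<Longrightarrow> Phi m d (sh s t) u = sh (Phi m d s) (Phi m d t) u"
        using less Cons by auto
      have "Phi m d (sh s t) w = sh ?D (Phi m d (dv b (sh s t))) w'"
        using Cons True by (simp add: Phi_Cons)
      also have "\<dots> = sh ?D (\<lambda>v. sh (Phi m d (dv b s)) (Phi m d t) v + sh (Phi m d s) (Phi m d (dv b t)) v) w'"
        unfolding dv_sh Phi_add by (rule sh_local) (simp add: IH)
      also have "\<dots> = sh (sh ?D (Phi m d (dv b s))) (Phi m d t) w' + sh (Phi m d s) (sh ?D (Phi m d (dv b t))) w'"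
        by (simp add: sh_add_right sh_assoc) (metis sh_assoc sh_comm)
      also have "\<dots> = sh (Phi m d s) (Phi m d t) w"
        using Cons True by (simp add: sh_Cons dv_Phi)
      finally show ?thesis .
    next
      case False
      then show ?thesis using Cons by (simp add: Phi_Cons sh_Cons dv_Phi)
    qed
  qed
qed

lemma Phi_sh: "Phi m d (sh s t) = sh (Phi m d s) (Phi m d t)"
  using Phi_sh_pt by blast

lemma D_mult_comp: "D (mult_comp m b c) x = sh (D c x) (Phi m c (D b x))"
  by (simp add: D_def mult_comp_Phi)

lemma Phi_comp_pt: "Phi m c (Phi m b a) w = Phi m (mult_comp m b c) a w"
proof (induction "length w" arbitrary: w a rule: less_induct)
  case less
  show ?case
  proof (cases w)
    case Nil then show ?thesis by simp
  next
    case (Cons x w')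
    show ?thesis
    proof (cases "x \<le> m")
      case True
      have IH: "\<And>u a. length u \<le> length w' \<Longrightarrow> Phi m c (Phi m b a) u = Phi m (mult_comp m b c) a u"
        using less Cons by auto
      have "Phi m c (Phi m b a) w = sh (D c x) (sh (Phi m c (D b x)) (Phi m c (Phi m b (dv x a)))) w'"
        using Cons True by (simp add: Phi_Cons dv_Phi Phi_sh)
      also have "\<dots> = sh (D c x) (sh (Phi m c (D b x)) (Phi m (mult_comp m b c) (dv x a))) w'"
        by (rule sh_local, rule sh_local) (simp add: IH)
      also have "\<dots> = Phi m (mult_comp m b c) a w"
        using Cons True by (simp add: Phi_Cons D_mult_comp sh_assoc)
      finally show ?thesis .
    next
      case False
      then show ?thesis using Cons by (simp add: Phi_Cons)
    qed
  qed
qed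

lemma mult_comp_assoc: "mult_comp m (mult_comp m x y) z = mult_comp m x (mult_comp m y z)"
proof (rule ext)
  fix i
  have "Phi m z (Phi m y (x i)) = Phi m (mult_comp m y z) (x i)"
    using Phi_comp_pt by blast
  then show "mult_comp m (mult_comp m x y) z i = mult_comp m x (mult_comp m y z) i"
    by (simp add: mult_comp_Phi Phi_sh sh_assoc)
qed

lemma sh_bad:
  assumes "\<And>u. \<not> set u \<subseteq> {0..m} \<Longrightarrow> f u = 0" "\<And>u. \<not> set u \<subseteq> {0..m} \<Longrightarrow> g u = 0"
    and "\<not> set w \<subseteq> {0..m}"
  shows "sh f g w = 0"
  using assms
proof (induction w arbitrary: f g)
  case Nil then show ?case by simp
next
  case (Cons b w)
  show ?case
  proof (cases "b \<le> m")
    case True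
    have "sh (dv b f) g w = 0" by (rule Cons.IH) (use Cons.prems True in \<open>auto simp: dv_def\<close>)
    moreover have "sh f (dv b g) w = 0" by (rule Cons.IH) (use Cons.prems True in \<open>auto simp: dv_def\<close>)
    ultimately show ?thesis by (simp add: sh_Cons)
  next
    case False
    have "dv b f = (\<lambda>_. 0)" "dv b g = (\<lambda>_. 0)" using Cons.prems False by (auto simp: dv_def)
    then show ?thesis by (simp add: sh_Cons)
  qed
qed

lemma D_bad: "wf_vseries m d \<Longrightarrow> \<not> set u \<subseteq> {0..m} \<Longrightarrow> D d b u = 0"
  by (cases u) (auto simp: D_def wf_vseries_def one_series_def)

lemma Phi_bad: "wf_vseries m d \<Longrightarrow> \<not> set w \<subseteq> {0..m} \<Longrightarrow> Phi m d s w = 0"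
proof (induction "length w" arbitrary: w s rule: less_induct)
  case less
  show ?case
  proof (cases w)
    case Nil then show ?thesis using less by simp
  next
    case (Cons b w')
    show ?thesis
    proof (cases "b \<le> m")
      case True
      let ?g = "\<lambda>v. if set v \<subseteq> {0..m} then Phi m d (dv b s) v else 0"
      have bad: "\<not> set w' \<subseteq> {0..m}" using less.prems Cons True by auto
      have "Phi m d s w = sh (D d b) (Phi m d (dv b s)) w'" using Cons True by (simp add: Phi_Cons)
      also have "\<dots> = sh (D d b) ?g w'"
        by (rule sh_local) (use less Cons in auto)
      also have "\<dots> = 0"
        by (rule sh_bad[OF _ _ bad]) (use D_bad less.prems in auto)
      finally show ?thesis .
    next
      case False then show ?thesis using Cons by (simp add: Phi_Cons)
    qed
  qed
qed

lemma mult_closed: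
  assumes "x \<in> pi_series m" "y \<in> pi_series m"
  shows "mult_comp m x y \<in> pi_series m"
proof -
  have wx: "wf_vseries m x" and wy: "wf_vseries m y" and px: "purely_improper m x" and py: "purely_improper m y"
    using assms by (auto simp: pi_series_def)
  have "wf_vseries m (mult_comp m x y)"
    unfolding wf_vseries_def
  proof (intro allI impI)
    fix i w assume h: "i \<notin> {1..m} \<or> \<not> set w \<subseteq> {0..m}"
    show "mult_comp m x y i w = 0"
    proof (cases "i \<in> {1..m}")
      case False
      then have "y i = (\<lambda>_. 0)" using wy by (auto simp: wf_vseries_def)
      then show ?thesis by (simp add: mult_comp_Phi)
    next
      case True
      then have bad: "\<not> set w \<subseteq> {0..m}" using h by auto
      show ?thesis unfolding mult_comp_Phi
        by (rule sh_bad[OF _ _ bad]) (use wy Phi_bad[OF wy] in \<open>auto simp: wf_vseries_def\<close>)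
    qed
  qed
  moreover have "purely_improper m (mult_comp m x y)"
    using px py by (simp add: purely_improper_def mult_comp_Phi)
  ultimately show ?thesis by (simp add: pi_series_def)
qed

lemma one_closed: "one_vseries m \<in> pi_series m"
  by (auto simp: pi_series_def wf_vseries_def purely_improper_def one_vseries_def one_series_def)

lemma l_one: "x \<in> pi_series m \<Longrightarrow> mult_comp m (one_vseries m) x = x"
proof (rule ext)
  fix i assume x: "x \<in> pi_series m"
  show "mult_comp m (one_vseries m) x i = x i"
  proof (cases "i \<in> {1..m}")
    case True then show ?thesis by (simp add: mult_comp_Phi one_vseries_def)
  next
    case False
    then have "x i = (\<lambda>_. 0)" using x by (auto simp: pi_series_def wf_vseries_def)
    then show ?thesis using False by (simp add: mult_comp_Phi one_vseries_def)
  qed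
qed

lemma Phi_one_v: "Phi m (one_vseries m) s w = (if set w \<subseteq> {0..m} then s w else 0)"
proof (induction w arbitrary: s)
  case Nil then show ?case by simp
next
  case (Cons b w)
  have "b \<le> m \<Longrightarrow> D (one_vseries m) b = one_series"
    by (simp add: D_def one_vseries_def)
  then show ?case by (simp add: Phi_Cons Cons.IH dv_def)
qed

lemma r_one: "x \<in> pi_series m \<Longrightarrow> mult_comp m x (one_vseries m) = x"
proof (rule ext)
  fix i assume x: "x \<in> pi_series m"
  show "mult_comp m x (one_vseries m) i = x i"
  proof (cases "i \<in> {1..m}")
    case True
    have "Phi m (one_vseries m) (x i) = x i"
      using x by (auto simp: Phi_one_v pi_series_def wf_vseries_def)
    then show ?thesis using True by (simp add: mult_comp_Phi one_vseries_def)
  next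
    case False
    then have "x i = (\<lambda>_. 0)" using x by (auto simp: pi_series_def wf_vseries_def)
    then show ?thesis using False by (simp add: mult_comp_Phi one_vseries_def)
  qed
qed



lemma fix_len:
  fixes F :: "series \<Rightarrow> series"
  assumes loc: "\<And>g g' w. (\<And>u. length u < length w \<Longrightarrow> g u = g' u) \<Longrightarrow> F g w = F g' w"
  shows "\<exists>g. \<forall>w. g w = F g w"
proof -
  define it where "it n = (F ^^ n) (\<lambda>_. 0)" for n
  have itS: "it (Suc n) = F (it n)" for n by (simp add: it_def)
  have A: "\<forall>u::nat list. length u < n \<longrightarrow> it (Suc n) u = it n u" for n
  proof (induction n)
    case 0 then show ?case by simp
  next
    case (Suc n)
    show ?case
    proof (intro allI impI)
      fix u :: "nat list" assume "length u < Suc n"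
      then have "F (it (Suc n)) u = F (it n) u"
        by (rule_tac loc) (use Suc in auto)
      then show "it (Suc (Suc n)) u = it (Suc n) u"
        by (simp only: itS)
    qed
  qed
  have B: "it (Suc (length v) + k) v = it (Suc (length v)) v" for v k
  proof (induction k)
    case 0 then show ?case by simp
  next
    case (Suc k)
    have "it (Suc (Suc (length v) + k)) v = it (Suc (length v) + k) v" using A by auto
    then show ?case using Suc by simp
  qed
  have C: "j > length v \<Longrightarrow> it j v = it (Suc (length v)) v" for j v
    using B[of v "j - Suc (length v)"] by simp
  define g where "g w = it (Suc (length w)) w" for w
  have "g w = F g w" for w
  proof -
    have "F g w = F (it (length w)) w"
    proof (rule loc)
      fix u :: "nat list" assume "length u < length w"
      then have "it (length w) u = it (Suc (length u)) u" by (rule C)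
      then show "g u = it (length w) u" by (simp add: g_def)
    qed
    also have "\<dots> = g w" by (simp add: g_def itS)
    finally show ?thesis by simp
  qed
  then show ?thesis by blast
qed

lemma length_nths_compl_less:
  assumes "S \<in> Pow {..<length w} - {{}}"
  shows "length (nths w ({..<length w} - S)) < length w"
proof -
  have e: "{i. i < length w \<and> i \<in> {..<length w} - S} = {..<length w} - S" by auto
  have "length (nths w ({..<length w} - S)) = card ({..<length w} - S)"
    unfolding length_nths e ..
  also have "\<dots> < card {..<length w}"
  proof (rule psubset_card_mono)
    show "{..<length w} - S \<subset> {..<length w}" using assms by auto
  qed simp
  finally show ?thesis by simp
qed

lemma sh_inverse:
  assumes f0: "f [] \<noteq> 0" and fb: "\<And>u. \<not> set u \<subseteq> {0..m} \<Longrightarrow> f u = 0"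
  shows "\<exists>t. sh f t = one_series \<and> (\<forall>u. \<not> set u \<subseteq> {0..m} \<longrightarrow> t u = 0)"
proof -
  define F where "F t w = (if w = [] then 1 / f [] else if \<not> set w \<subseteq> {0..m} then 0 else
     - (\<Sum>S\<in>Pow {..<length w} - {{}}. f (nths w S) * t (nths w ({..<length w} - S))) / f [])"
    for t :: series and w
  have "\<exists>t. \<forall>w. t w = F t w"
  proof (rule fix_len)
    fix g g' :: series and w :: "nat list"
    assume h: "\<And>u. length u < length w \<Longrightarrow> g u = g' u"
    have "(\<Sum>S\<in>Pow {..<length w} - {{}}. f (nths w S) * g (nths w ({..<length w} - S))) =
          (\<Sum>S\<in>Pow {..<length w} - {{}}. f (nths w S) * g' (nths w ({..<length w} - S)))"
      by (rule sum.cong) (simp_all add: h length_nths_compl_less)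
    then show "F g w = F g' w" unfolding F_def by simp
  qed
  then obtain t where t: "\<And>w. t w = F t w" by blast
  have tb: "\<forall>u. \<not> set u \<subseteq> {0..m} \<longrightarrow> t u = 0"
  proof (intro allI impI)
    fix u assume "\<not> set u \<subseteq> {0..m}"
    moreover then have "u \<noteq> []" by auto
    ultimately show "t u = 0" by (subst t) (simp add: F_def)
  qed
  have "sh f t w = one_series w" for w
  proof (cases "w = []")
    case True then show ?thesis using t[of "[]"] f0 by (simp add: F_def one_series_def)
  next
    case ne: False
    show ?thesis
    proof (cases "set w \<subseteq> {0..m}")
      case False
      then show ?thesis using ne by (simp add: sh_bad[OF fb] tb one_series_def)
    next
      case True
      let ?h = "\<lambda>S. f (nths w S) * t (nths w ({..<length w} - S))"
      have "sh f t w = ?h {} + sum ?h (Pow {..<length w} - {{}})"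
        unfolding shuffle_prod_def by (rule sum.remove) auto
      also have "?h {} = f [] * t w" by simp
      also have "t w = - sum ?h (Pow {..<length w} - {{}}) / f []"
        using t[of w] ne True by (simp add: F_def)
      finally show ?thesis using f0 ne by (simp add: one_series_def)
    qed
  qed
  then show ?thesis using tb by blast
qed

definition kdiag :: "vseries \<Rightarrow> nat list \<Rightarrow> real" where
  "kdiag d w = prod_list (map (\<lambda>a. D d a []) w)"

lemma phi_diag: "length \<eta> = length w \<Longrightarrow> phi d \<eta> one_series w = (if \<eta> = w then kdiag d w else 0)"
proof (induction \<eta> arbitrary: w)
  case Nil then show ?case by (simp add: one_series_def kdiag_def)
next
  case (Cons a \<eta>)
  then obtain b w' where w: "w = b # w'" by (cases w) auto
  have "sh (D d a) (phi d \<eta> one_series) w' = D d a [] * phi d \<eta> one_series w'"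
    by (rule sh_lowest) (use Cons.prems w in \<open>auto intro: phi_short\<close>)
  then show ?case using Cons w by (auto simp add: phi_Cons_Cons kdiag_def simp del: phi.simps)
qed

lemma kdiag_nz: "purely_improper m d \<Longrightarrow> set w \<subseteq> {0..m} \<Longrightarrow> kdiag d w \<noteq> 0"
  by (induction w) (auto simp: kdiag_def D_def purely_improper_def one_series_def)

definition Bw :: "nat \<Rightarrow> nat list \<Rightarrow> nat list set" where
  "Bw m w = {\<eta>. set \<eta> \<subseteq> {0..m} \<and> length \<eta> < length w}"

lemma Phi_decomp:
  "Phi m d s w = (if set w \<subseteq> {0..m} then s w * kdiag d w else 0) +
     (\<Sum>\<eta>\<in>Bw m w. s \<eta> * phi d \<eta> one_series w)"
proof -
  let ?C = "{\<eta>. set \<eta> \<subseteq> {0..m} \<and> length \<eta> = length w}"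
  let ?g = "\<lambda>\<eta>. s \<eta> * phi d \<eta> one_series w"
  have fin: "finite ?C" "finite (Bw m w)"
    by (rule finite_subset[OF _ finite_Aw[of m "length w"]], auto simp: Aw_def Bw_def)+
  have "Aw m (length w) = Bw m w \<union> ?C" by (auto simp: Aw_def Bw_def)
  moreover have "Bw m w \<inter> ?C = {}" by (auto simp: Bw_def)
  ultimately have "Phi m d s w = sum ?g (Bw m w) + sum ?g ?C"
    unfolding Phi_def by (simp only: sum.union_disjoint[OF fin(2) fin(1)])
  also have "sum ?g ?C = (\<Sum>\<eta>\<in>?C. if \<eta> = w then s w * kdiag d w else 0)"
    by (rule sum.cong) (auto simp: phi_diag)
  also have "\<dots> = (if set w \<subseteq> {0..m} then s w * kdiag d w else 0)"
    using fin(1) by (simp add: sum.delta')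
  finally show ?thesis by simp
qed

lemma Phi_inverse:
  assumes d: "d \<in> pi_series m" and tb: "\<And>u. \<not> set u \<subseteq> {0..m} \<Longrightarrow> t u = 0"
  shows "\<exists>y. Phi m d y = t \<and> (\<forall>u. \<not> set u \<subseteq> {0..m} \<longrightarrow> y u = 0) \<and> y [] = t []"
proof -
  have wd: "wf_vseries m d" and pd: "purely_improper m d" using d by (auto simp: pi_series_def)
  define F where "F y w = (if set w \<subseteq> {0..m} then
      (t w - (\<Sum>\<eta>\<in>Bw m w. y \<eta> * phi d \<eta> one_series w)) / kdiag d w else 0)"
    for y :: series and w
  have "\<exists>y. \<forall>w. y w = F y w"
  proof (rule fix_len)
    fix g g' :: series and w :: "nat list"
    assume h: "\<And>u. length u < length w \<Longrightarrow> g u = g' u"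
    have "(\<Sum>\<eta>\<in>Bw m w. g \<eta> * phi d \<eta> one_series w) = (\<Sum>\<eta>\<in>Bw m w. g' \<eta> * phi d \<eta> one_series w)"
      by (rule sum.cong) (simp_all add: h Bw_def)
    then show "F g w = F g' w" unfolding F_def by simp
  qed
  then obtain y where y: "\<And>w. y w = F y w" by blast
  have "Phi m d y w = t w" for w
  proof (cases "set w \<subseteq> {0..m}")
    case True
    have k: "kdiag d w \<noteq> 0" using kdiag_nz[OF pd True] .
    show ?thesis using y[of w] True k by (simp add: Phi_decomp F_def)
  next
    case False
    then show ?thesis using Phi_bad[OF wd False] tb by simp
  qed
  moreover have "\<forall>u. \<not> set u \<subseteq> {0..m} \<longrightarrow> y u = 0"
    by (intro allI impI, subst y) (simp add: F_def)
  moreover have "y [] = t []" using y[of "[]"] by (simp add: F_def Bw_def kdiag_def)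
  ultimately show ?thesis by blast
qed

lemma l_inv_ex:
  assumes x: "x \<in> pi_series m"
  shows "\<exists>y\<in>pi_series m. mult_comp m y x = one_vseries m"
proof -
  have wx: "wf_vseries m x" and px: "purely_improper m x" using x by (auto simp: pi_series_def)
  let ?P = "\<lambda>i yi. (\<forall>u. \<not> set u \<subseteq> {0..m} \<longrightarrow> yi u = 0) \<and> yi [] \<noteq> 0 \<and> sh (x i) (Phi m x yi) = one_series"
  have "\<forall>i\<in>{1..m}. \<exists>yi. ?P i yi"
  proof
    fix i assume i: "i \<in> {1..m}"
    have f0: "x i [] \<noteq> 0" using px i by (simp add: purely_improper_def)
    have fb: "\<And>u. \<not> set u \<subseteq> {0..m} \<Longrightarrow> x i u = 0" using wx by (simp add: wf_vseries_def)
    obtain t where t1: "sh (x i) t = one_series" and t2: "\<forall>u. \<not> set u \<subseteq> {0..m} \<longrightarrow> t u = 0"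
      using sh_inverse[of "x i" m, OF f0 fb] by blast
    have t0: "t [] \<noteq> 0"
    proof
      assume "t [] = 0"
      then have "sh (x i) t [] = 0" by simp
      then show False using t1 by (simp add: one_series_def)
    qed
    obtain yi where y1: "Phi m x yi = t" and y2: "\<forall>u. \<not> set u \<subseteq> {0..m} \<longrightarrow> yi u = 0" and y3: "yi [] = t []"
      using Phi_inverse[OF x] t2 by blast
    show "\<exists>yi. ?P i yi" using y1 y2 y3 t0 t1 by metis
  qed
  then obtain Y where Y: "\<forall>i\<in>{1..m}. ?P i (Y i)" by (rule bchoice[THEN exE]) blast
  define y where "y i = (if i \<in> {1..m} then Y i else (\<lambda>_. 0))" for i
  have "y \<in> pi_series m"
    using Y by (auto simp: pi_series_def wf_vseries_def purely_improper_def y_def)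
  moreover have "mult_comp m y x = one_vseries m"
  proof (rule ext)
    fix i show "mult_comp m y x i = one_vseries m i"
    proof (cases "i \<in> {1..m}")
      case True then show ?thesis using Y by (simp add: mult_comp_Phi y_def one_vseries_def)
    next
      case False
      then have "x i = (\<lambda>_. 0)" using wx by (auto simp: wf_vseries_def)
      then show ?thesis using False by (auto simp add: mult_comp_Phi one_vseries_def)
    qed
  qed
  ultimately show ?thesis by blast
qed

theorem theorem8:
  fixes m :: nat
  shows "group (delta_group m) \<and> \<one>\<^bsub>delta_group m\<^esub> = one_vseries m"
proof
  have M: "monoid (delta_group m)"
    by (rule monoidI) (simp_all add: delta_group_def mult_closed one_closed mult_comp_assoc l_one r_one)
  show "group (delta_group m)"
    by (rule monoid.group_l_invI[OF M]) (simp add: delta_group_def l_inv_ex)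
  show "\<one>\<^bsub>delta_group m\<^esub> = one_vseries m" by (simp add: delta_group_def)
qed

end
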